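(* Let $N=(S,T,F,M_0,\ell)$ and $N'=(S',T',F',M'_0,\ell')$ be two Petri nets, $N'$ being plain. Suppose there is a relation $\mathcal B\subseteq(\mathbb N^S\times\mathbb N^T)\times(\mathbb N^{S'}\times\mathbb N^{T'})$ such that (a) $(M_0,\emptyset)\mathcal B(M'_0,\emptyset)$; (b) if $(M_1,U_1)\mathcal B(M_1',U_1')$ and $(M_1,U_1)\xrightarrow{\tau}(M_2,U_2)$ then $(M_2,U_2)\mathcal B(M_1',U_1')$; (c) if $(M_1,U_1)\mathcal B(M_1',U_1')$ and $(M_1,U_1)\xrightarrow{\eta}(M_2,U_2)$ for some $\eta\in\mathrm{Act}^\pm$ then there is $(M_2',U_2')$ with $(M_1',U_1')\xrightarrow{\eta}(M_2',U_2')$ and $(M_2,U_2)\mathcal B(M_2',U_2')$; (d) if $(M_1,U_1)\mathcal B(M_1',U_1')$ and $(M_1',U_1')\xrightarrow{\eta}$ with $\eta\in\mathrm{Act}^\pm$ then $(M_1,U_1)\xrightarrow{\eta}$ or $(M_1,U_1)\xrightarrow{\tau}$; (e) there is no infinite sequence $(M,U)\xrightarrow{\tau}(M_1,U_1)\xrightarrow{\tau}(M_2,U_2)\xrightarrow{\tau}\cdots$ with $(M,U)\mathcal B(M',U')$ for some $(M',U')$. Then $\mathcal B$ is a branching split bisimulation with explicit divergence, and $N\approx^\Delta_{bSTb}N'$.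
   Context: Fix visible actions $\mathrm{Act}$ and $\tau\notin\mathrm{Act}$. A Petri net $(S,T,F,M_0,\ell)$ has disjoint $S,T$, $F:(S\times T)\cup(T\times S)\to\mathbb N$, $M_0\in\mathbb N^S$, $\ell:T\to\mathrm{Act}\cup\{\tau\}$; ${}^\bullet t(s)=F(s,t)$, $t^\bullet(s)=F(t,s)$; $M[t\rangle M'$ iff ${}^\bullet t\le M$ and $M'=M-{}^\bullet t+t^\bullet$. Plain: $\ell$ injective and never $\tau$. Split markings are pairs $(M,U)\in\mathbb N^S\times\mathbb N^T$ with transitions labelled in $\mathrm{Act}^\pm=\{a^+,a^-\mid a\in\mathrm{Act}\}$ or $\tau$: $(M,U)\xrightarrow{a^+}(M-{}^\bullet t,U+\{t\})$ iff $\ell(t)=a$ and $M[t\rangle$; $(M,U)\xrightarrow{a^-}(M+t^\bullet,U-\{t\})$ iff $t\in U$ and $\ell(t)=a$; $(M,U)\xrightarrow{\tau}(M',U)$ iff $M[t\rangle M'$ for some $t$ with $\ell(t)=\tau$. The split LTS of a net has initial state $(M_0,\emptyset)$. A branching split bisimulation with explicit divergence is a relation $\mathcal B$ between split markings of the two nets relating the initial ones such that: if $\mathfrak M_1\mathcal B\mathfrak M_2$ and $\mathfrak M_1\xrightarrow{\alpha}\mathfrak M_1'$ then $\mathfrak M_2\Rightarrow\mathfrak M_2^\dagger\xrightarrow{(\alpha)}\mathfrak M_2'$ with $\mathfrak M_1\mathcal B\mathfrak M_2^\dagger$, $\mathfrak M_1'\mathcal B\mathfrak M_2'$ ($\Rightarrow$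 reflexive transitive closure of $\xrightarrow{\tau}$; $\xrightarrow{(\alpha)}$ is $\xrightarrow{\alpha}$ or, if $\alpha=\tau$, equality), and symmetrically; and if $\mathfrak M_1\mathcal B\mathfrak M_2$ and an infinite $\tau$-sequence from $\mathfrak M_1$ has all states related to $\mathfrak M_2$ then there is an infinite $\tau$-sequence from $\mathfrak M_2$ with all pairs of states related, and symmetrically. $N\approx^\Delta_{bSTb}N'$ is defined likewise on ST-markings $(M,U)\in\mathbb N^S\times T^*$ with initial state $(M_0,\varepsilon)$ and transitions $(M,U)\xrightarrow{a^+}(M-{}^\bullet t,Ut)$ iff $\ell(t)=a\in\mathrm{Act}$ and $M[t\rangle$; $(M,U)\xrightarrow{a^{-n}}(M+t^\bullet,U^{-n})$ iff the $n$-th element $t$ of $U$ has label $a$ ($U^{-n}$: with it removed); $(M,U)\xrightarrow{\tau}(M',U)$ iff $M[t\rangle M'$ with $\ell(t)=\tau$. *)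

theory Defs
  imports Main
begin

text \<open>Places are the elements of type 's, transitions those of type 't
  (so S and T are disjoint). The flow function F is split into
  pre t s = F(s,t) and post t s = F(t,s). Labels: None stands for tau,
  Some a for a visible action a.\<close>

record ('s, 't, 'a) pnet =
  pre  :: "'t \<Rightarrow> 's \<Rightarrow> nat"
  post :: "'t \<Rightarrow> 's \<Rightarrow> nat"
  m0   :: "'s \<Rightarrow> nat"
  lab  :: "'t \<Rightarrow> 'a option"

definition plain :: "('s, 't, 'a) pnet \<Rightarrow> bool" where
  "plain N \<longleftrightarrow> inj (lab N) \<and> (\<forall>t. lab N t \<noteq> None)"

definition enabled :: "('s, 't, 'a) pnet \<Rightarrow> ('s \<Rightarrow> nat) \<Rightarrow> 't \<Rightarrow> bool" where
  "enabled N M t \<longleftrightarrow> pre N t \<le> M"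

definition fire :: "('s, 't, 'a) pnet \<Rightarrow> ('s \<Rightarrow> nat) \<Rightarrow> 't \<Rightarrow> ('s \<Rightarrow> nat)" where
  "fire N M t = (\<lambda>s. M s - pre N t s + post N t s)"

datatype 'a slab = SPlus 'a | SMinus 'a | STau

inductive split_step :: "('s, 't, 'a) pnet \<Rightarrow> ('s \<Rightarrow> nat) \<times> ('t \<Rightarrow> nat)
    \<Rightarrow> 'a slab \<Rightarrow> ('s \<Rightarrow> nat) \<times> ('t \<Rightarrow> nat) \<Rightarrow> bool" for N where
  plus: "lab N t = Some a \<Longrightarrow> enabled N M t \<Longrightarrow>
     split_step N (M, U) (SPlus a) (\<lambda>s. M s - pre N t s, U(t := U t + 1))"
| minus: "U t > 0 \<Longrightarrow> lab N t = Some a \<Longrightarrow>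
     split_step N (M, U) (SMinus a) (\<lambda>s. M s + post N t s, U(t := U t - 1))"
| tau: "lab N t = None \<Longrightarrow> enabled N M t \<Longrightarrow>
     split_step N (M, U) STau (fire N M t, U)"

text \<open>ST semantics: labels a+, a^{-n} (n counted from 1), tau.\<close>

datatype 'a stlab = STPlus 'a | STMinus 'a nat | STTauL

inductive st_step :: "('s, 't, 'a) pnet \<Rightarrow> ('s \<Rightarrow> nat) \<times> 't list
    \<Rightarrow> 'a stlab \<Rightarrow> ('s \<Rightarrow> nat) \<times> 't list \<Rightarrow> bool" for N where
  plus: "lab N t = Some a \<Longrightarrow> enabled N M t \<Longrightarrow>
     st_step N (M, U) (STPlus a) (\<lambda>s. M s - pre N t s, U @ [t])"
| minus: "1 \<le> n \<Longrightarrow> n \<le> length U \<Longrightarrow> lab N (U ! (n - 1)) = Some a \<Longrightarrow>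
     st_step N (M, U) (STMinus a n)
        (\<lambda>s. M s + post N (U ! (n - 1)) s, take (n - 1) U @ drop n U)"
| tau: "lab N t = None \<Longrightarrow> enabled N M t \<Longrightarrow>
     st_step N (M, U) STTauL (fire N M t, U)"

text \<open>Generic branching bisimulation with explicit divergence between two LTSs
  (step relations with a common label type and a distinguished tau label).\<close>

definition bb_transfer :: "('p \<Rightarrow> 'l \<Rightarrow> 'p \<Rightarrow> bool) \<Rightarrow> ('q \<Rightarrow> 'l \<Rightarrow> 'q \<Rightarrow> bool)
    \<Rightarrow> 'l \<Rightarrow> ('p \<Rightarrow> 'q \<Rightarrow> bool) \<Rightarrow> bool" where
  "bb_transfer st1 st2 tau B \<longleftrightarrow>
     (\<forall>p q \<alpha> p'. B p q \<and> st1 p \<alpha> p' \<longrightarrow>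
        (\<exists>q1 q'. (\<lambda>x y. st2 x tau y)\<^sup>*\<^sup>* q q1 \<and>
                 (st2 q1 \<alpha> q' \<or> (\<alpha> = tau \<and> q' = q1)) \<and>
                 B p q1 \<and> B p' q'))"

definition bb_div :: "('p \<Rightarrow> 'l \<Rightarrow> 'p \<Rightarrow> bool) \<Rightarrow> ('q \<Rightarrow> 'l \<Rightarrow> 'q \<Rightarrow> bool)
    \<Rightarrow> 'l \<Rightarrow> ('p \<Rightarrow> 'q \<Rightarrow> bool) \<Rightarrow> bool" where
  "bb_div st1 st2 tau B \<longleftrightarrow>
     (\<forall>p q f. B p q \<and> f 0 = p \<and> (\<forall>i. st1 (f i) tau (f (Suc i))) \<and> (\<forall>i. B (f i) q) \<longrightarrow>
        (\<exists>g. g 0 = q \<and> (\<forall>j. st2 (g j) tau (g (Suc j))) \<and> (\<forall>i j. B (f i) (g j))))"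

definition bbisim_div :: "('p \<Rightarrow> 'l \<Rightarrow> 'p \<Rightarrow> bool) \<Rightarrow> ('q \<Rightarrow> 'l \<Rightarrow> 'q \<Rightarrow> bool)
    \<Rightarrow> 'l \<Rightarrow> ('p \<Rightarrow> 'q \<Rightarrow> bool) \<Rightarrow> bool" where
  "bbisim_div st1 st2 tau B \<longleftrightarrow>
     bb_transfer st1 st2 tau B \<and> bb_transfer st2 st1 tau (\<lambda>q p. B p q) \<and>
     bb_div st1 st2 tau B \<and> bb_div st2 st1 tau (\<lambda>q p. B p q)"

definition split_bbisim_div :: "('s, 't, 'a) pnet \<Rightarrow> ('s2, 't2, 'a) pnet
    \<Rightarrow> (('s \<Rightarrow> nat) \<times> ('t \<Rightarrow> nat) \<Rightarrow> ('s2 \<Rightarrow> nat) \<times> ('t2 \<Rightarrow> nat) \<Rightarrow> bool) \<Rightarrow> bool" where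
  "split_bbisim_div N N' B \<longleftrightarrow>
     B (m0 N, \<lambda>_. 0) (m0 N', \<lambda>_. 0) \<and> bbisim_div (split_step N) (split_step N') STau B"

definition bSTb_div_equiv :: "('s, 't, 'a) pnet \<Rightarrow> ('s2, 't2, 'a) pnet \<Rightarrow> bool" where
  "bSTb_div_equiv N N' \<longleftrightarrow>
     (\<exists>B. B (m0 N, []) (m0 N', []) \<and> bbisim_div (st_step N) (st_step N') STTauL B)"

end

theory Submission
  imports Defs
begin

definition cnt :: "'t list \<Rightarrow> 't \<Rightarrow> nat" where
  "cnt U = (\<lambda>t. count_list U t)"

lemma cnt_nil: "cnt [] = (\<lambda>_. 0)"
  by (simp add: cnt_def)

lemma cnt_snoc: "cnt (U @ [t]) = (cnt U)(t := cnt U t + 1)"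
  by (auto simp: cnt_def fun_eq_iff)

lemma cnt_remove:
  assumes "1 \<le> n" "n \<le> length U"
  shows "cnt (take (n - 1) U @ drop n U) = (cnt U)(U ! (n - 1) := cnt U (U ! (n - 1)) - 1)"
    and "cnt U (U ! (n - 1)) > 0"
proof -
  have i: "n - 1 < length U" using assms by simp
  have n: "n = Suc (n - 1)" using assms by simp
  have U: "U = take (n - 1) U @ U ! (n - 1) # drop n U"
    using id_take_nth_drop[OF i] n by simp
  have "count_list U x = count_list (take (n - 1) U @ drop n U) x + (if x = U ! (n - 1) then 1 else 0)" for x
    by (subst U) simp
  then show "cnt (take (n - 1) U @ drop n U) = (cnt U)(U ! (n - 1) := cnt U (U ! (n - 1)) - 1)"
    and "cnt U (U ! (n - 1)) > 0"
    by (auto simp: cnt_def fun_eq_iff)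
qed

lemma plain_no_tau: "plain N' \<Longrightarrow> \<not> split_step N' x STau y"
  by (simp add: plain_def split_step.simps)

lemma plain_no_sttau: "plain N' \<Longrightarrow> \<not> st_step N' x STTauL y"
  by (simp add: plain_def st_step.simps)

lemma plain_det:
  assumes "plain N'" "split_step N' x \<alpha> y" "split_step N' x \<alpha> z"
  shows "y = z"
proof -
  have inj: "inj (lab N')" using assms(1) by (simp add: plain_def)
  show ?thesis using assms(2,3)
  proof (cases rule: split_step.cases)
    case (plus t a M U)
    from assms(3)[unfolded plus] obtain t2 where "lab N' t2 = Some a" "z = (\<lambda>s. M s - pre N' t2 s, U(t2 := U t2 + 1))"
      by (auto elim: split_step.cases)
    moreover have "t2 = t" using injD[OF inj] plus calculation by metis
    ultimately show ?thesis using plus by simp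
  next
    case (minus U t a M)
    from assms(3)[unfolded minus] obtain t2 where "lab N' t2 = Some a" "z = (\<lambda>s. M s + post N' t2 s, U(t2 := U t2 - 1))"
      by (auto elim: split_step.cases)
    moreover have "t2 = t" using injD[OF inj] minus calculation by metis
    ultimately show ?thesis using minus by simp
  next
    case (tau t M U)
    then show ?thesis using assms(1) plain_no_tau by (metis assms(2))
  qed
qed

lemma split_plus_inv:
  "split_step N (M, V) (SPlus a) y \<Longrightarrow>
   \<exists>t. lab N t = Some a \<and> enabled N M t \<and> y = (\<lambda>s. M s - pre N t s, V(t := V t + 1))"
  by (erule split_step.cases) auto

lemma split_minus_inv:
  "split_step N (M, V) (SMinus a) y \<Longrightarrow>
   \<exists>t. V t > 0 \<and> lab N t = Some a \<and> y = (\<lambda>s. M s + post N t s, V(t := V t - 1))"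
  by (erule split_step.cases) auto

lemma st_tau_split:
  "st_step N (M, U) STTauL y \<Longrightarrow> \<exists>M'. y = (M', U) \<and> split_step N (M, cnt U) STau (M', cnt U)"
  by (erule st_step.cases) (auto intro: split_step.tau)

lemma split_tau_st:
  "split_step N (M, cnt U) STau y \<Longrightarrow> \<exists>M'. y = (M', cnt U) \<and> st_step N (M, U) STTauL (M', U)"
  by (erule split_step.cases) (auto intro: st_step.tau)

lemma tau_star_lift:
  assumes "(\<lambda>x y. split_step N x STau y)\<^sup>*\<^sup>* (M, cnt U) p1"
  shows "\<exists>M1. p1 = (M1, cnt U) \<and> (\<lambda>x y. st_step N x STTauL y)\<^sup>*\<^sup>* (M, U) (M1, U)"
  using assms
proof (induction rule: rtranclp_induct)
  case base
  then show ?case by auto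
next
  case (step y z)
  then obtain M1 where y: "y = (M1, cnt U)" and r: "(\<lambda>x y. st_step N x STTauL y)\<^sup>*\<^sup>* (M, U) (M1, U)"
    by auto
  from step(2) y split_tau_st obtain M2 where "z = (M2, cnt U)" "st_step N (M1, U) STTauL (M2, U)"
    by metis
  then show ?case using r by (auto intro: rtranclp.rtrancl_into_rtrancl)
qed


theorem lemma6p3:
  fixes N :: "('s, 't, 'a) pnet" and N' :: "('s2, 't2, 'a) pnet"
    and B :: "('s \<Rightarrow> nat) \<times> ('t \<Rightarrow> nat) \<Rightarrow> ('s2 \<Rightarrow> nat) \<times> ('t2 \<Rightarrow> nat) \<Rightarrow> bool"
  assumes plainN': "plain N'"
    and a: "B (m0 N, \<lambda>_. 0) (m0 N', \<lambda>_. 0)"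
    and b: "\<And>p1 p1' p2. B p1 p1' \<Longrightarrow> split_step N p1 STau p2 \<Longrightarrow> B p2 p1'"
    and c: "\<And>p1 p1' p2 \<eta>. B p1 p1' \<Longrightarrow> \<eta> \<noteq> STau \<Longrightarrow> split_step N p1 \<eta> p2 \<Longrightarrow>
              \<exists>p2'. split_step N' p1' \<eta> p2' \<and> B p2 p2'"
    and d: "\<And>p1 p1' p2' \<eta>. B p1 p1' \<Longrightarrow> \<eta> \<noteq> STau \<Longrightarrow> split_step N' p1' \<eta> p2' \<Longrightarrow>
              (\<exists>p2. split_step N p1 \<eta> p2) \<or> (\<exists>p2. split_step N p1 STau p2)"
    and e: "\<not> (\<exists>f q. B (f 0) q \<and> (\<forall>i. split_step N (f i) STau (f (Suc i))))"
  shows "split_bbisim_div N N' B \<and> bSTb_div_equiv N N'"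
proof -
  define R where "R = {(y, x). split_step N x STau y \<and> (\<exists>q. B x q)}"
  have wfR: "wf R"
    unfolding wf_iff_no_infinite_down_chain
  proof
    assume "\<exists>f. \<forall>i. (f (Suc i), f i) \<in> R"
    then obtain f where f: "\<forall>i. (f (Suc i), f i) \<in> R" by blast
    then obtain q where "B (f 0) q" unfolding R_def by blast
    moreover have "\<forall>i. split_step N (f i) STau (f (Suc i))" using f unfolding R_def by blast
    ultimately show False using e by blast
  qed
  have bk: "\<forall>q q' \<alpha>. B p q \<longrightarrow> \<alpha> \<noteq> STau \<longrightarrow> split_step N' q \<alpha> q' \<longrightarrow>
      (\<exists>p1. (\<lambda>x y. split_step N x STau y)\<^sup>*\<^sup>* p p1 \<and> B p1 q \<and> (\<exists>p'. split_step N p1 \<alpha> p'))" for p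
    using wfR
  proof (induction p rule: wf_induct_rule)
    case (less p)
    show ?case
    proof (intro allI impI)
      fix q q' \<alpha>
      assume Bpq: "B p q" and na: "\<alpha> \<noteq> STau" and st: "split_step N' q \<alpha> q'"
      from d[OF Bpq na st] show "\<exists>p1. (\<lambda>x y. split_step N x STau y)\<^sup>*\<^sup>* p p1 \<and> B p1 q \<and> (\<exists>p'. split_step N p1 \<alpha> p')"
      proof
        assume "\<exists>p2. split_step N p \<alpha> p2"
        then show ?thesis using Bpq by blast
      next
        assume "\<exists>p2. split_step N p STau p2"
        then obtain p2 where s2: "split_step N p STau p2" by blast
        have B2: "B p2 q" using b[OF Bpq s2] .
        have "(p2, p) \<in> R" unfolding R_def using s2 Bpq by blast
        from less[OF this] B2 na st obtain p1 where
          "(\<lambda>x y. split_step N x STau y)\<^sup>*\<^sup>* p2 p1" "B p1 q" "\<exists>p'. split_step N p1 \<alpha> p'" by blast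
        then show ?thesis using s2 by (meson converse_rtranclp_into_rtranclp)
      qed
    qed
  qed
  have fwd_det: "B p' q'" if "B p q" "\<alpha> \<noteq> STau" "split_step N' q \<alpha> q'" "split_step N p \<alpha> p'" for p q p' q' \<alpha>
  proof -
    from c[OF that(1,2,4)] obtain q2 where "split_step N' q \<alpha> q2" "B p' q2" by blast
    with plain_det[OF plainN' this(1) that(3)] show ?thesis by simp
  qed
  have part1: "split_bbisim_div N N' B"
    unfolding split_bbisim_div_def bbisim_div_def
  proof (intro conjI)
    show "B (m0 N, \<lambda>_. 0) (m0 N', \<lambda>_. 0)" by (rule a)
    show "bb_transfer (split_step N) (split_step N') STau B"
      unfolding bb_transfer_def
    proof (intro allI impI)
      fix p q \<alpha> p' assume H: "B p q \<and> split_step N p \<alpha> p'"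
      show "\<exists>q1 q'. (\<lambda>x y. split_step N' x STau y)\<^sup>*\<^sup>* q q1 \<and>
                 (split_step N' q1 \<alpha> q' \<or> (\<alpha> = STau \<and> q' = q1)) \<and> B p q1 \<and> B p' q'"
      proof (cases "\<alpha> = STau")
        case True
        then show ?thesis using H b by blast
      next
        case False
        then show ?thesis using H c by blast
      qed
    qed
    show "bb_transfer (split_step N') (split_step N) STau (\<lambda>q p. B p q)"
      unfolding bb_transfer_def
    proof (intro allI impI)
      fix q p \<alpha> q' assume H: "B p q \<and> split_step N' q \<alpha> q'"
      have na: "\<alpha> \<noteq> STau" using H plain_no_tau[OF plainN'] by blast
      from bk H na obtain p1 p' where "(\<lambda>x y. split_step N x STau y)\<^sup>*\<^sup>* p p1" "B p1 q" "split_step N p1 \<alpha> p'"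
        by blast
      moreover have "B p' q'" using fwd_det[OF \<open>B p1 q\<close> na _ \<open>split_step N p1 \<alpha> p'\<close>] H by blast
      ultimately show "\<exists>p1 p'. (\<lambda>x y. split_step N x STau y)\<^sup>*\<^sup>* p p1 \<and>
                 (split_step N p1 \<alpha> p' \<or> (\<alpha> = STau \<and> p' = p1)) \<and> B p1 q \<and> B p' q'" by blast
    qed
    show "bb_div (split_step N) (split_step N') STau B"
      unfolding bb_div_def using e by blast
    show "bb_div (split_step N') (split_step N) STau (\<lambda>q p. B p q)"
      unfolding bb_div_def using plain_no_tau[OF plainN'] by blast
  qed
  define Bst where "Bst = (\<lambda>p q. B (fst p, cnt (snd p)) (fst q, cnt (snd q)) \<and>
                                map (lab N) (snd p) = map (lab N') (snd q))"
  have part2: "Bst (m0 N, []) (m0 N', []) \<and> bbisim_div (st_step N) (st_step N') STTauL Bst"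
    unfolding bbisim_div_def
  proof (intro conjI)
    show "Bst (m0 N, []) (m0 N', [])" unfolding Bst_def using a by (simp add: cnt_nil)
    show "bb_transfer (st_step N) (st_step N') STTauL Bst"
      unfolding bb_transfer_def
    proof (intro allI impI)
      fix p q \<alpha> p' assume H: "Bst p q \<and> st_step N p \<alpha> p'"
      obtain M' U' where q: "q = (M', U')" by force
      have HB: "B (fst p, cnt (snd p)) (M', cnt U')" and HL: "map (lab N) (snd p) = map (lab N') U'"
        using H q unfolding Bst_def by auto
      from H have "st_step N p \<alpha> p'" by blast
      then show "\<exists>q1 q'. (\<lambda>x y. st_step N' x STTauL y)\<^sup>*\<^sup>* q q1 \<and>
                 (st_step N' q1 \<alpha> q' \<or> (\<alpha> = STTauL \<and> q' = q1)) \<and> Bst p q1 \<and> Bst p' q'"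
      proof (cases rule: st_step.cases)
        case (plus t a M U)
        have "split_step N (M, cnt U) (SPlus a) (\<lambda>s. M s - pre N t s, (cnt U)(t := cnt U t + 1))"
          using plus by (intro split_step.plus) auto
        then have "split_step N (M, cnt U) (SPlus a) (\<lambda>s. M s - pre N t s, cnt (U @ [t]))"
          by (simp add: cnt_snoc)
        moreover have HB': "B (M, cnt U) (M', cnt U')" using HB plus by simp
        ultimately obtain p2' where
          s2: "split_step N' (M', cnt U') (SPlus a) p2'" "B (\<lambda>s. M s - pre N t s, cnt (U @ [t])) p2'" using c by blast
        from split_plus_inv[OF s2(1)] obtain t' where t': "lab N' t' = Some a" "enabled N' M' t'"
          "p2' = (\<lambda>s. M' s - pre N' t' s, (cnt U')(t' := cnt U' t' + 1))" by blast
        have st': "st_step N' (M', U') (STPlus a) (\<lambda>s. M' s - pre N' t' s, U' @ [t'])"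
          using t' by (intro st_step.plus) auto
        have "Bst p' (\<lambda>s. M' s - pre N' t' s, U' @ [t'])"
          unfolding Bst_def using plus t' s2 HL by (simp add: cnt_snoc)
        then show ?thesis using st' q H plus(2) rtranclp.rtrancl_refl by blast
      next
        case (minus n U a M)
        let ?u = "U ! (n - 1)"
        have cu: "cnt U ?u > 0" using cnt_remove(2)[OF minus(4,5)] .
        have "split_step N (M, cnt U) (SMinus a) (\<lambda>s. M s + post N ?u s, (cnt U)(?u := cnt U ?u - 1))"
          using minus cu by (intro split_step.minus) auto
        then have "split_step N (M, cnt U) (SMinus a) (\<lambda>s. M s + post N ?u s, cnt (take (n - 1) U @ drop n U))"
          by (simp only: cnt_remove(1)[OF minus(4,5)])
        moreover have HB': "B (M, cnt U) (M', cnt U')" using HB minus by simp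
        ultimately obtain p2' where
          s2: "split_step N' (M', cnt U') (SMinus a) p2'"
              "B (\<lambda>s. M s + post N ?u s, cnt (take (n - 1) U @ drop n U)) p2'" using c by blast
        from split_minus_inv[OF s2(1)] obtain t' where t': "cnt U' t' > 0" "lab N' t' = Some a"
          "p2' = (\<lambda>s. M' s + post N' t' s, (cnt U')(t' := cnt U' t' - 1))" by blast
        have len: "length U' = length U" using HL minus by (metis length_map snd_conv)
        have "lab N' (U' ! (n - 1)) = lab N ?u"
          using HL minus len by (metis nth_map snd_conv diff_less less_le_trans zero_less_one)
        then have "lab N' (U' ! (n - 1)) = Some a" using minus by simp
        then have u': "U' ! (n - 1) = t'" using t'(2) plainN' unfolding plain_def by (metis injD)
        have st': "st_step N' (M', U') (STMinus a n) (\<lambda>s. M' s + post N' t' s, take (n - 1) U' @ drop n U')"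
          using st_step.minus[of n U' N' a M'] minus len u' t' by simp
        have "map (lab N) (take (n - 1) U @ drop n U) = map (lab N') (take (n - 1) U' @ drop n U')"
          using HL minus by (simp add: take_map[symmetric] drop_map[symmetric])
        then have "Bst p' (\<lambda>s. M' s + post N' t' s, take (n - 1) U' @ drop n U')"
          unfolding Bst_def using minus t' s2 u' len cnt_remove(1)[of n U'] by simp
        then show ?thesis using st' q H minus(2) rtranclp.rtrancl_refl by blast
      next
        case (tau t M U)
        have "split_step N (M, cnt U) STau (fire N M t, cnt U)" using tau by (intro split_step.tau) auto
        then have "B (fire N M t, cnt U) (M', cnt U')" using b HB tau by auto
        then have "Bst p' q" unfolding Bst_def using tau q HL by simp
        then show ?thesis using H tau q rtranclp.rtrancl_refl by blast
      qed
    qed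
    show "bb_transfer (st_step N') (st_step N) STTauL (\<lambda>q p. Bst p q)"
      unfolding bb_transfer_def
    proof (intro allI impI)
      fix q p \<alpha> q' assume H: "Bst p q \<and> st_step N' q \<alpha> q'"
      obtain M U where p: "p = (M, U)" by force
      have HB: "B (M, cnt U) (fst q, cnt (snd q))" and HL: "map (lab N) U = map (lab N') (snd q)"
        using H p unfolding Bst_def by auto
      from H have "st_step N' q \<alpha> q'" by blast
      then show "\<exists>p1 p'. (\<lambda>x y. st_step N x STTauL y)\<^sup>*\<^sup>* p p1 \<and>
                 (st_step N p1 \<alpha> p' \<or> (\<alpha> = STTauL \<and> p' = p1)) \<and> Bst p1 q \<and> Bst p' q'"
      proof (cases rule: st_step.cases)
        case (plus t' a M' U')
        have "split_step N' (M', cnt U') (SPlus a) (\<lambda>s. M' s - pre N' t' s, (cnt U')(t' := cnt U' t' + 1))"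
          using plus by (intro split_step.plus) auto
        then have s': "split_step N' (M', cnt U') (SPlus a) (\<lambda>s. M' s - pre N' t' s, cnt (U' @ [t']))"
          by (simp add: cnt_snoc)
        from bk[of "(M, cnt U)"] HB plus s' obtain p1 p1' where
          r: "(\<lambda>x y. split_step N x STau y)\<^sup>*\<^sup>* (M, cnt U) p1" and B1: "B p1 (M', cnt U')"
          and s1: "split_step N p1 (SPlus a) p1'" by fastforce
        from tau_star_lift[OF r] obtain M1 where p1: "p1 = (M1, cnt U)"
          and r': "(\<lambda>x y. st_step N x STTauL y)\<^sup>*\<^sup>* (M, U) (M1, U)" by blast
        from split_plus_inv[OF s1[unfolded p1]] obtain t where t: "lab N t = Some a" "enabled N M1 t"
          "p1' = (\<lambda>s. M1 s - pre N t s, (cnt U)(t := cnt U t + 1))" by blast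
        have Bp': "B p1' (\<lambda>s. M' s - pre N' t' s, cnt (U' @ [t']))"
          using fwd_det[OF B1 _ s' s1] by simp
        have st: "st_step N (M1, U) (STPlus a) (\<lambda>s. M1 s - pre N t s, U @ [t])"
          using t by (intro st_step.plus) auto
        have "Bst (\<lambda>s. M1 s - pre N t s, U @ [t]) q'"
          unfolding Bst_def using Bp' t plus HL by (simp add: cnt_snoc)
        moreover have "Bst (M1, U) q" unfolding Bst_def using B1 p1 plus HL by simp
        ultimately show ?thesis using r' st p plus(2) by blast
      next
        case (minus n U' a M')
        let ?u' = "U' ! (n - 1)"
        have cu: "cnt U' ?u' > 0" using cnt_remove(2)[OF minus(4,5)] .
        have "split_step N' (M', cnt U') (SMinus a) (\<lambda>s. M' s + post N' ?u' s, (cnt U')(?u' := cnt U' ?u' - 1))"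
          using minus cu by (intro split_step.minus) auto
        then have s': "split_step N' (M', cnt U') (SMinus a) (\<lambda>s. M' s + post N' ?u' s, cnt (take (n - 1) U' @ drop n U'))"
          by (simp only: cnt_remove(1)[OF minus(4,5)])
        from bk[of "(M, cnt U)"] HB minus s' obtain p1 where
          r: "(\<lambda>x y. split_step N x STau y)\<^sup>*\<^sup>* (M, cnt U) p1" and B1: "B p1 (M', cnt U')"
          by fastforce
        from tau_star_lift[OF r] obtain M1 where p1: "p1 = (M1, cnt U)"
          and r': "(\<lambda>x y. st_step N x STTauL y)\<^sup>*\<^sup>* (M, U) (M1, U)" by blast
        let ?u = "U ! (n - 1)"
        have len: "length U' = length U" using HL minus by (metis length_map snd_conv)
        have "lab N' ?u' = lab N ?u"
          using HL minus len by (metis nth_map snd_conv diff_less less_le_trans zero_less_one)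
        then have lu: "lab N ?u = Some a" using minus by simp
        have n1: "1 \<le> n" "n \<le> length U" using minus len by auto
        have cu1: "cnt U ?u > 0" using cnt_remove(2)[OF n1] .
        have "split_step N (M1, cnt U) (SMinus a) (\<lambda>s. M1 s + post N ?u s, (cnt U)(?u := cnt U ?u - 1))"
          using lu cu1 by (intro split_step.minus) auto
        then have s1: "split_step N (M1, cnt U) (SMinus a) (\<lambda>s. M1 s + post N ?u s, cnt (take (n - 1) U @ drop n U))"
          by (simp only: cnt_remove(1)[OF n1])
        have Bp': "B (\<lambda>s. M1 s + post N ?u s, cnt (take (n - 1) U @ drop n U))
                     (\<lambda>s. M' s + post N' ?u' s, cnt (take (n - 1) U' @ drop n U'))"
          using fwd_det[OF B1[unfolded p1] _ s' s1] by simp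
        have st: "st_step N (M1, U) (STMinus a n) (\<lambda>s. M1 s + post N ?u s, take (n - 1) U @ drop n U)"
          using st_step.minus[of n U N a M1] n1 lu by simp
        have "map (lab N) (take (n - 1) U @ drop n U) = map (lab N') (take (n - 1) U' @ drop n U')"
          using HL minus by (simp add: take_map[symmetric] drop_map[symmetric])
        then have "Bst (\<lambda>s. M1 s + post N ?u s, take (n - 1) U @ drop n U) q'"
          unfolding Bst_def using Bp' minus by simp
        moreover have "Bst (M1, U) q" unfolding Bst_def using B1 p1 minus HL by simp
        ultimately show ?thesis using r' st p minus(2) by blast
      next
        case (tau t M U)
        then show ?thesis using H plain_no_sttau[OF plainN'] by blast
      qed
    qed
    show "bb_div (st_step N) (st_step N') STTauL Bst"
      unfolding bb_div_def
    proof (intro allI impI)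
      fix p q f assume H: "Bst p q \<and> f 0 = p \<and> (\<forall>i. st_step N (f i) STTauL (f (Suc i))) \<and> (\<forall>i. Bst (f i) q)"
      define g where "g i = (fst (f i), cnt (snd (f i)))" for i
      have "split_step N (g i) STau (g (Suc i))" for i
      proof -
        have "st_step N (fst (f i), snd (f i)) STTauL (f (Suc i))" using H by simp
        from st_tau_split[OF this] show ?thesis unfolding g_def by auto
      qed
      moreover have "B (g 0) (fst q, cnt (snd q))" using H unfolding g_def Bst_def by simp
      ultimately have False using e by blast
      then show "\<exists>g. g 0 = q \<and> (\<forall>j. st_step N' (g j) STTauL (g (Suc j))) \<and> (\<forall>i j. Bst (f i) (g j))" ..
    qed
    show "bb_div (st_step N') (st_step N) STTauL (\<lambda>q p. Bst p q)"
      unfolding bb_div_def using plain_no_sttau[OF plainN'] by blast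
  qed
  show ?thesis using part1 part2 unfolding bSTb_div_equiv_def by blast
qed

end
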